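(* Let $d\ge 1$ and $r\geq 0$. The natural maps $H^r(\Gamma(d,1,n+1);\mathbb{Q})\to H^r(\Gamma(d,1,n);\mathbb{Q})$ are surjective for all $n\ge 1$, and they are isomorphisms for $n\geq 2r$ (so $H^r(\Gamma(d,1,n);\mathbb{Q})$ stabilizes for $n\geq 2r$).
   Context: $G(d,1,n)$ is the group of $n\times n$ monomial matrices with nonzero entries $d$-th roots of unity, acting on $\mathbb{C}^n$, with hyperplane arrangement $\mathcal A$ (hyperplanes $z_i=\zeta z_j$, $i<j$, $\zeta^d=1$, and, for $d>1$, $z_i=0$). With $X=\mathbb{C}^n\setminus\bigcup\mathcal A$, $P=\pi_1(X)$, $B=\pi_1(X/G(d,1,n))$, $\Gamma(d,1,n)=B/[P,P]$, and $H^\bullet(\Gamma(d,1,n);\mathbb{Q})\cong\Lambda^\bullet(\mathbb{Q}\mathcal A)^{G(d,1,n)}$. The natural maps are induced by the inclusion $\Gamma(d,1,n)\hookrightarrow\Gamma(d,1,n+1)$ compatible with $G(d,1,n)\hookrightarrow G(d,1,n+1)$, $M\mapsto\mathrm{diag}(M,1)$; on the exterior algebras they send the $d\log$ forms of hyperplanes not involving $z_{n+1}$ to themselves and the others to $0$. *)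

theory Defs
  imports Complex_Main
begin

text \<open>Vectors of C^n are modelled as functions nat => complex; coordinates are
  0-based (coordinate i corresponds to z_(i+1) of the paper).  A hyperplane is a
  subset of the space nat => complex cut out by one linear equation involving only
  the first n coordinates, so that the arrangement for n is literally contained in
  the arrangement for n+1 (these are exactly the hyperplanes "not involving z_(n+1)").\<close>

definition arrangement :: "nat \<Rightarrow> nat \<Rightarrow> (nat \<Rightarrow> complex) set set" where
  "arrangement d n =
     {{z. z i = \<zeta> * z j} | i j \<zeta>. i < j \<and> j < n \<and> \<zeta> ^ d = 1}
     \<union> (if d > 1 then {{z. z i = 0} | i. i < n} else {})"

definition monomial_group :: "nat \<Rightarrow> nat \<Rightarrow> (nat \<Rightarrow> nat \<Rightarrow> complex) set" where
  "monomial_group d n =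
     {M. (\<forall>i j. (n \<le> i \<or> n \<le> j) \<longrightarrow> M i j = 0)
       \<and> (\<forall>i<n. \<exists>!j. j < n \<and> M i j \<noteq> 0)
       \<and> (\<forall>j<n. \<exists>!i. i < n \<and> M i j \<noteq> 0)
       \<and> (\<forall>i<n. \<forall>j<n. M i j \<noteq> 0 \<longrightarrow> M i j ^ d = 1)}"

definition mat_act :: "nat \<Rightarrow> (nat \<Rightarrow> nat \<Rightarrow> complex) \<Rightarrow> (nat \<Rightarrow> complex) \<Rightarrow> (nat \<Rightarrow> complex)" where
  "mat_act n M z = (\<lambda>i. if i < n then (\<Sum>j<n. M i j * z j) else z i)"

text \<open>Lambda^r(Q A), for A a finite set (the basis), modelled as alternating
  r-tensors: an element  sum c(H_1..H_r) dlog H_1 (x) ... (x) dlog H_r  is given by its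
  coefficient function c on lists of length r of elements of A, which is alternating.\<close>

definition ext_power :: "'a set \<Rightarrow> nat \<Rightarrow> ('a list \<Rightarrow> rat) set" where
  "ext_power A r =
     {c. (\<forall>xs. c xs \<noteq> 0 \<longrightarrow> length xs = r \<and> set xs \<subseteq> A)
       \<and> (\<forall>xs. \<not> distinct xs \<longrightarrow> c xs = 0)
       \<and> (\<forall>xs i j. i < length xs \<longrightarrow> j < length xs \<longrightarrow> i \<noteq> j \<longrightarrow>
              c (xs[i := xs ! j, j := xs ! i]) = - c xs)}"

text \<open>H^r(Gamma(d,1,n); Q) = Lambda^r(Q A)^{G(d,1,n)}; G acts on dlog forms by
  permuting hyperplanes (g . dlog alpha_H = dlog alpha_{gH}).\<close>

definition cohom :: "nat \<Rightarrow> nat \<Rightarrow> nat \<Rightarrow> (((nat \<Rightarrow> complex) set) list \<Rightarrow> rat) set" where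
  "cohom d n r =
     {c \<in> ext_power (arrangement d n) r.
        \<forall>M \<in> monomial_group d n. \<forall>xs. c (map (\<lambda>H. mat_act n M ` H) xs) = c xs}"

text \<open>The natural map H^r(Gamma(d,1,n+1)) -> H^r(Gamma(d,1,n)): dlog forms of
  hyperplanes of the n-arrangement go to themselves, the others to 0.\<close>

definition natural_map :: "nat \<Rightarrow> nat \<Rightarrow> (((nat \<Rightarrow> complex) set) list \<Rightarrow> rat)
     \<Rightarrow> (((nat \<Rightarrow> complex) set) list \<Rightarrow> rat)" where
  "natural_map d n c = (\<lambda>xs. if set xs \<subseteq> arrangement d n then c xs else 0)"

end

theory Submission
  imports Defs "HOL-Combinatorics.Permutations"
begin


definition act :: "nat \<Rightarrow> (nat \<Rightarrow> nat) \<Rightarrow> (nat \<Rightarrow> complex) \<Rightarrow> (nat \<Rightarrow> complex) \<Rightarrow> (nat \<Rightarrow> complex)" where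
  "act m p t z = (\<lambda>i. if i < m then t i * z (p i) else z i)"

definition Fg :: "nat \<Rightarrow> nat \<Rightarrow> ((nat \<Rightarrow> complex) \<Rightarrow> (nat \<Rightarrow> complex)) set" where
  "Fg d m = {act m p t | p t. p permutes {..<m} \<and> (\<forall>i<m. t i ^ d = 1)}"

definition dep :: "nat set \<Rightarrow> (nat \<Rightarrow> complex) set \<Rightarrow> bool" where
  "dep D H = (\<forall>z z'. (\<forall>i\<in>D. z i = z' i) \<longrightarrow> (z \<in> H \<longleftrightarrow> z' \<in> H))"

lemma dep_mono: "dep D H \<Longrightarrow> D \<subseteq> D' \<Longrightarrow> dep D' H"
  unfolding dep_def by blast

lemma depD: "dep D H \<Longrightarrow> (\<And>i. i \<in> D \<Longrightarrow> z i = z' i) \<Longrightarrow> z \<in> H \<longleftrightarrow> z' \<in> H"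
  unfolding dep_def by blast

lemma depI: "(\<And>z z'. (\<And>i. i \<in> D \<Longrightarrow> z i = z' i) \<Longrightarrow> z \<in> H \<Longrightarrow> z' \<in> H) \<Longrightarrow> dep D H"
  unfolding dep_def by metis

lemma root_nz: "(x::complex) ^ d = 1 \<Longrightarrow> d \<ge> 1 \<Longrightarrow> x \<noteq> 0"
  by (cases d) auto

lemma arr_dep: "H \<in> arrangement d m \<Longrightarrow> \<exists>a b. a < m \<and> b < m \<and> dep {a, b} H"
proof -
  assume "H \<in> arrangement d m"
  then consider (a) i j \<zeta> where "H = {z. z i = \<zeta> * z j}" "i < j" "j < m"
    | (b) i where "H = {z. z i = 0}" "i < m"
    unfolding arrangement_def by (auto split: if_splits)
  then show ?thesis
  proof cases
    case a
    have "dep {i, j} H" unfolding a(1) by (rule depI) auto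
    moreover have "i < m" using a by simp
    ultimately show ?thesis using a by blast
  next
    case b
    have "dep {i, i} H" unfolding b(1) by (rule depI) auto
    then show ?thesis using b by blast
  qed
qed

lemma arr_dep_all: "H \<in> arrangement d m \<Longrightarrow> dep {..<m} H"
  using arr_dep[of H d m] by (auto elim!: dep_mono)

lemma arr_mono: "arrangement d m \<subseteq> arrangement d (Suc m)"
proof
  fix H assume "H \<in> arrangement d m"
  then consider (a) i j \<zeta> where "H = {z. z i = \<zeta> * z j}" "i < j" "j < m" "\<zeta> ^ d = 1"
    | (b) i where "d > 1" "H = {z. z i = 0}" "i < m"
    unfolding arrangement_def by (auto split: if_splits)
  then show "H \<in> arrangement d (Suc m)"
  proof cases
    case a
    then have "j < Suc m" by simp
    then have "H \<in> {{z. z i = \<zeta> * z j} |i j \<zeta>. i < j \<and> j < Suc m \<and> \<zeta> ^ d = 1}" using a by blast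
    then show ?thesis unfolding arrangement_def by blast
  next
    case b
    then have "H \<in> {{z. z i = 0} | i. i < Suc m}" by auto
    then show ?thesis using b unfolding arrangement_def by auto
  qed
qed

lemma arr_down:
  assumes "d \<ge> 1" "H \<in> arrangement d (Suc m)" "dep {..<m} H"
  shows "H \<in> arrangement d m"
proof -
  let ?z0 = "(\<lambda>_. 0) :: nat \<Rightarrow> complex"
  let ?z1 = "?z0(m := 1)"
  have agree: "\<forall>i\<in>{..<m}. ?z0 i = ?z1 i" by auto
  have iff: "?z0 \<in> H \<longleftrightarrow> ?z1 \<in> H" by (rule depD[OF assms(3)]) auto
  from assms(2) consider (a) i j \<zeta> where "H = {z. z i = \<zeta> * z j}" "i < j" "j < Suc m" "\<zeta> ^ d = 1"
    | (b) i where "d > 1" "H = {z. z i = 0}" "i < Suc m"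
    unfolding arrangement_def by (auto split: if_splits)
  then show ?thesis
  proof cases
    case a
    have "\<zeta> \<noteq> 0" using root_nz a(4) assms(1) by blast
    have "j \<noteq> m"
    proof
      assume "j = m"
      then have "?z0 \<in> H" "?z1 \<notin> H" using a \<open>\<zeta> \<noteq> 0\<close> by auto
      then show False using iff by blast
    qed
    then have "j < m" using a by simp
    then have "H \<in> {{z. z i = \<zeta> * z j} |i j \<zeta>. i < j \<and> j < m \<and> \<zeta> ^ d = 1}" using a by blast
    then show ?thesis unfolding arrangement_def by blast
  next
    case b
    have "i \<noteq> m"
    proof
      assume "i = m"
      then have "?z0 \<in> H" "?z1 \<notin> H" using b by auto
      then show False using iff by blast
    qed
    then have "H \<in> {{z. z i = 0} | i. i < m}" using b by auto
    then show ?thesis using b unfolding arrangement_def by auto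
  qed
qed



lemma act_comp:
  assumes "p1 permutes {..<m}"
  shows "act m p1 t1 \<circ> act m p2 t2 = act m (p2 \<circ> p1) (\<lambda>i. t1 i * t2 (p1 i))"
proof (rule ext)
  fix z show "(act m p1 t1 \<circ> act m p2 t2) z = act m (p2 \<circ> p1) (\<lambda>i. t1 i * t2 (p1 i)) z"
  proof (rule ext)
    fix i
    have "i < m \<Longrightarrow> p1 i < m" using permutes_in_image[OF assms] by auto
    then show "(act m p1 t1 \<circ> act m p2 t2) z i = act m (p2 \<circ> p1) (\<lambda>i. t1 i * t2 (p1 i)) z i"
      by (simp add: act_def)
  qed
qed

lemma Fg_comp:
  assumes "f \<in> Fg d m" "g \<in> Fg d m"
  shows "f \<circ> g \<in> Fg d m"
proof -
  obtain p1 t1 where f: "f = act m p1 t1" "p1 permutes {..<m}" "\<forall>i<m. t1 i ^ d = 1"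
    using assms(1) unfolding Fg_def by blast
  obtain p2 t2 where g: "g = act m p2 t2" "p2 permutes {..<m}" "\<forall>i<m. t2 i ^ d = 1"
    using assms(2) unfolding Fg_def by blast
  have "p2 \<circ> p1 permutes {..<m}" using f g by (simp add: permutes_compose)
  moreover have "\<forall>i<m. (t1 i * t2 (p1 i)) ^ d = 1"
  proof (intro allI impI)
    fix i assume "i < m"
    then have "p1 i < m" using permutes_in_image[OF f(2)] by auto
    then show "(t1 i * t2 (p1 i)) ^ d = 1" using f g \<open>i < m\<close> by (simp add: power_mult_distrib)
  qed
  ultimately show ?thesis unfolding Fg_def f(1) g(1) act_comp[OF f(2)] by blast
qed

lemma Fg_id: "id \<in> Fg d m"
proof -
  have "act m id (\<lambda>_. 1) = id" by (auto simp: act_def fun_eq_iff)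
  moreover have "id permutes {..<m}" by (rule permutes_id)
  ultimately show ?thesis unfolding Fg_def
    by (intro CollectI exI[of _ id] exI[of _ "\<lambda>_. 1"]) simp
qed

lemma Fg_inv:
  assumes "d \<ge> 1" "f \<in> Fg d m"
  shows "\<exists>g \<in> Fg d m. g \<circ> f = id \<and> f \<circ> g = id"
proof -
  obtain p t where f: "f = act m p t" "p permutes {..<m}" "\<forall>i<m. t i ^ d = 1"
    using assms(2) unfolding Fg_def by blast
  define g where "g = act m (inv p) (\<lambda>j. 1 / t (inv p j))"
  have ip: "inv p permutes {..<m}" using f(2) by (rule permutes_inv)
  have inm: "\<And>i. i < m \<Longrightarrow> inv p i < m" "\<And>i. i < m \<Longrightarrow> p i < m"
    using permutes_in_image[OF ip] permutes_in_image[OF f(2)] by auto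
  have tnz: "\<And>i. i < m \<Longrightarrow> t i \<noteq> 0" using f(3) root_nz assms(1) by blast
  have "\<forall>i<m. (1 / t (inv p i)) ^ d = 1" using f(3) inm by (simp add: power_divide)
  then have "g \<in> Fg d m" unfolding g_def Fg_def using ip by blast
  moreover have "g \<circ> f = id"
    by (auto simp: fun_eq_iff g_def f(1) act_def inm tnz permutes_inverses[OF f(2)])
  moreover have "f \<circ> g = id"
    by (auto simp: fun_eq_iff g_def f(1) act_def inm tnz permutes_inverses[OF f(2)])
  ultimately show ?thesis by blast
qed

lemma image_inv_eq: "g \<circ> f = id \<Longrightarrow> f \<circ> g = id \<Longrightarrow> f ` H = g -` H"
  by (auto simp: fun_eq_iff) (metis image_eqI)

lemma Fg_preimage:
  assumes "d \<ge> 1" "f \<in> Fg d m" "H \<in> arrangement d m"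
  shows "f -` H \<in> arrangement d m"
proof -
  obtain p t where f: "f = act m p t" "p permutes {..<m}" "\<forall>i<m. t i ^ d = 1"
    using assms(2) unfolding Fg_def by blast
  have inm: "\<And>i. i < m \<Longrightarrow> p i < m"
    using permutes_in_image[OF f(2)] by auto
  have tnz: "\<And>i. i < m \<Longrightarrow> t i \<noteq> 0" using f(3) root_nz assms(1) by blast
  from assms(3) consider (a) i j \<zeta> where "H = {z. z i = \<zeta> * z j}" "i < j" "j < m" "\<zeta> ^ d = 1"
    | (b) i where "d > 1" "H = {z. z i = 0}" "i < m"
    unfolding arrangement_def by (auto split: if_splits)
  then show ?thesis
  proof cases
    case a
    have im: "i < m" using a by simp
    have pij: "p i \<noteq> p j" using a permutes_inj[OF f(2)] by (auto dest: injD)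
    define \<xi> where "\<xi> = \<zeta> * t j / t i"
    have \<zeta>nz: "\<zeta> \<noteq> 0" using a(4) root_nz assms(1) by blast
    have \<xi>d: "\<xi> ^ d = 1" using a f(3) im by (simp add: \<xi>_def power_mult_distrib power_divide)
    have \<xi>nz: "\<xi> \<noteq> 0" using tnz im a \<zeta>nz by (simp add: \<xi>_def)
    have eq: "f -` H = {w. w (p i) = \<xi> * w (p j)}"
      using tnz[OF im] a im by (auto simp: f(1) act_def \<xi>_def field_simps)
    show ?thesis
    proof (cases "p i < p j")
      case True
      then have "f -` H \<in> {{z. z i = \<zeta> * z j} |i j \<zeta>. i < j \<and> j < m \<and> \<zeta> ^ d = 1}"
        using eq inm a \<xi>d by blast
      then show ?thesis unfolding arrangement_def by blast
    next
      case False
      then have lt: "p j < p i" using pij by simp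
      have eq2: "f -` H = {w. w (p j) = (1/\<xi>) * w (p i)}"
        unfolding eq using \<xi>nz by (auto simp: field_simps)
      have "(1/\<xi>) ^ d = 1" using \<xi>d by (simp add: power_divide)
      then have "f -` H \<in> {{z. z i = \<zeta> * z j} |i j \<zeta>. i < j \<and> j < m \<and> \<zeta> ^ d = 1}"
        using eq2 inm im lt by blast
      then show ?thesis unfolding arrangement_def by blast
    qed
  next
    case b
    have eq: "f -` H = {w. w (p i) = 0}"
      using tnz b by (auto simp: f(1) act_def)
    then have "f -` H \<in> {{z. z i = 0} | i. i < m}" using inm b by blast
    then show ?thesis using b unfolding arrangement_def by auto
  qed
qed

lemma Fg_image:
  assumes "d \<ge> 1" "f \<in> Fg d m" "H \<in> arrangement d m"
  shows "f ` H \<in> arrangement d m"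
proof -
  obtain g where g: "g \<in> Fg d m" "g \<circ> f = id" "f \<circ> g = id" using Fg_inv[OF assms(1,2)] by blast
  show ?thesis using image_inv_eq[OF g(2,3)] Fg_preimage[OF assms(1) g(1) assms(3)] by simp
qed



lemma mono_to_Fg:
  assumes "M \<in> monomial_group d m"
  shows "mat_act m M \<in> Fg d m"
proof -
  have row: "\<And>i. i < m \<Longrightarrow> \<exists>!j. j < m \<and> M i j \<noteq> 0"
    and col: "\<And>j. j < m \<Longrightarrow> \<exists>!i. i < m \<and> M i j \<noteq> 0"
    and pw: "\<And>i j. i < m \<Longrightarrow> j < m \<Longrightarrow> M i j \<noteq> 0 \<Longrightarrow> M i j ^ d = 1"
    using assms unfolding monomial_group_def by blast+
  define p where "p i = (if i < m then THE j. j < m \<and> M i j \<noteq> 0 else i)" for i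
  define t where "t i = M i (p i)" for i
  have pp: "p i < m \<and> M i (p i) \<noteq> 0" if "i < m" for i
    using theI'[OF row[OF that]] that by (simp add: p_def)
  have puniq: "\<And>i j. i < m \<Longrightarrow> j < m \<Longrightarrow> M i j \<noteq> 0 \<Longrightarrow> j = p i"
    using row pp by metis
  have inj: "inj_on p {..<m}"
  proof (rule inj_onI)
    fix i1 i2 assume "i1 \<in> {..<m}" "i2 \<in> {..<m}" "p i1 = p i2"
    then show "i1 = i2" using pp col by (metis lessThan_iff)
  qed
  have "p ` {..<m} \<subseteq> {..<m}" using pp by auto
  then have "p ` {..<m} = {..<m}" using inj by (simp add: endo_inj_surj)
  then have "bij_betw p {..<m} {..<m}" using inj by (simp add: bij_betw_def)
  then have perm: "p permutes {..<m}" by (rule bij_imp_permutes) (simp add: p_def)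
  have td: "\<forall>i<m. t i ^ d = 1" using pp pw by (simp add: t_def)
  have "mat_act m M = act m p t"
  proof (intro ext)
    fix z i
    show "mat_act m M z i = act m p t z i"
    proof (cases "i < m")
      case True
      have "(\<Sum>j<m. M i j * z j) = (\<Sum>j<m. if j = p i then M i (p i) * z (p i) else 0)"
        using puniq[OF True] by (intro sum.cong) auto
      also have "\<dots> = M i (p i) * z (p i)" using pp[OF True] by simp
      finally show ?thesis using True by (simp add: mat_act_def act_def t_def)
    next
      case False
      then show ?thesis by (simp add: mat_act_def act_def)
    qed
  qed
  then show ?thesis unfolding Fg_def using perm td by blast
qed

lemma Fg_to_mono:
  assumes "d \<ge> 1" "f \<in> Fg d m"
  shows "\<exists>M \<in> monomial_group d m. mat_act m M = f"
proof -
  obtain p t where f: "f = act m p t" "p permutes {..<m}" "\<forall>i<m. t i ^ d = 1"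
    using assms(2) unfolding Fg_def by blast
  have inm: "\<And>i. i < m \<Longrightarrow> p i < m"
    using permutes_in_image[OF f(2)] by auto
  have inm2: "\<And>i. i < m \<Longrightarrow> inv p i < m"
    using permutes_in_image[OF permutes_inv[OF f(2)]] by auto
  have tnz: "\<And>i. i < m \<Longrightarrow> t i \<noteq> 0" using f(3) root_nz assms(1) by blast
  define M where "M i j = (if i < m \<and> j < m \<and> j = p i then t i else 0)" for i j
  have "\<forall>i<m. \<exists>!j. j < m \<and> M i j \<noteq> 0"
  proof (intro allI impI)
    fix i assume "i < m"
    show "\<exists>!j. j < m \<and> M i j \<noteq> 0"
      by (rule ex1I[of _ "p i"]) (auto simp: M_def inm tnz \<open>i < m\<close> split: if_splits)
  qed
  moreover have "\<forall>j<m. \<exists>!i. i < m \<and> M i j \<noteq> 0"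
  proof (intro allI impI)
    fix j assume "j < m"
    show "\<exists>!i. i < m \<and> M i j \<noteq> 0"
    proof (rule ex1I[of _ "inv p j"])
      show "inv p j < m \<and> M (inv p j) j \<noteq> 0"
        using inm2 tnz \<open>j < m\<close> permutes_inverses[OF f(2)] by (simp add: M_def)
    next
      fix i assume "i < m \<and> M i j \<noteq> 0"
      then have "j = p i" by (simp add: M_def split: if_splits)
      then show "i = inv p j" using permutes_inverses[OF f(2)] by simp
    qed
  qed
  moreover have "\<forall>i<m. \<forall>j<m. M i j \<noteq> 0 \<longrightarrow> M i j ^ d = 1" using f(3) by (simp add: M_def)
  moreover have "\<forall>i j. (m \<le> i \<or> m \<le> j) \<longrightarrow> M i j = 0" by (simp add: M_def)
  ultimately have "M \<in> monomial_group d m" unfolding monomial_group_def by blast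
  moreover have "mat_act m M = f"
  proof (intro ext)
    fix z i
    show "mat_act m M z i = f z i"
    proof (cases "i < m")
      case True
      have "(\<Sum>j<m. M i j * z j) = (\<Sum>j<m. if j = p i then t i * z (p i) else 0)"
        using True by (intro sum.cong) (auto simp: M_def)
      also have "\<dots> = t i * z (p i)" using inm[OF True] by simp
      finally show ?thesis using True by (simp add: mat_act_def act_def f(1))
    next
      case False
      then show ?thesis by (simp add: mat_act_def act_def f(1))
    qed
  qed
  ultimately show ?thesis by blast
qed



lemma Fg_inv_img:
  assumes "d \<ge> 1" "f \<in> Fg d m" "f ` H \<in> arrangement d m"
  shows "H \<in> arrangement d m"
proof -
  obtain g where g: "g \<in> Fg d m" "g \<circ> f = id" using Fg_inv[OF assms(1,2)] by blast
  have "g ` (f ` H) = H" using g(2) by (simp add: image_comp)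
  then show ?thesis using Fg_image[OF assms(1) g(1) assms(3)] by simp
qed

lemma Fg_inj:
  assumes "d \<ge> 1" "f \<in> Fg d m"
  shows "inj f"
proof -
  obtain g where g: "g \<in> Fg d m" "g \<circ> f = id" using Fg_inv[OF assms(1,2)] by blast
  then show ?thesis by (metis inj_on_id inj_on_imageI2)
qed

lemma hl:
  assumes d: "d \<ge> 1" and perm: "p permutes {..<Suc n}" and td: "\<forall>i<Suc n. t i ^ d = 1"
    and HA: "H \<in> arrangement d n" and hHA: "act (Suc n) p t ` H \<in> arrangement d n"
  shows "act n (transpose (p n) n \<circ> p) t ` H = act (Suc n) p t ` H"
proof -
  define q where "q = p n"
  define p' where "p' = transpose q n \<circ> p"
  define h where "h = act (Suc n) p t"
  define h' where "h' = act n p' t"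
  have hF: "h \<in> Fg d (Suc n)" unfolding h_def Fg_def using perm td by blast
  have p'perm1: "p' permutes {..<Suc n}" unfolding p'_def
    by (rule permutes_compose[OF perm permutes_swap_id]) (use permutes_in_image[OF perm, of n] in \<open>auto simp: q_def\<close>)
  have p'n: "p' n = n" by (simp add: p'_def q_def)
  have p'perm: "p' permutes {..<n}"
    by (rule permutes_superset[OF p'perm1]) (use p'n in auto)
  have h'F: "h' \<in> Fg d n" unfolding h'_def Fg_def using p'perm td
    by (intro CollectI exI[of _ p'] exI[of _ t]) auto
  have pne: "p i \<noteq> q" if "i < n" for i
    using that permutes_inj[OF perm] unfolding q_def by (metis inj_eq less_irrefl)
  have p'i: "p' i = (if p i = n then q else p i)" if "i < n" for i
    using pne[OF that] by (simp add: p'_def transpose_def)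
  have dH: "dep {..<n} H" using arr_dep_all[OF HA] .
  have dhH: "dep {..<n} (h ` H)" using arr_dep_all hHA h_def by simp
  have dh'H: "dep {..<n} (h' ` H)" using arr_dep_all[OF Fg_image[OF d h'F HA]] .
  have hinj: "inj h" using Fg_inj[OF d hF] .
  have ph: "p i = q \<Longrightarrow> i < Suc n \<Longrightarrow> i = n" for i
    using permutes_inj[OF perm] unfolding q_def by (metis inj_eq)
  show ?thesis
  proof
    show "act n (transpose (p n) n \<circ> p) t ` H \<subseteq> act (Suc n) p t ` H"
    proof
      fix w assume "w \<in> act n (transpose (p n) n \<circ> p) t ` H"
      then obtain z where z: "z \<in> H" "w = h' z" unfolding h'_def p'_def q_def by blast
      define z2 where "z2 = z(n := z q)"
      have "z2 \<in> H" using depD[OF dH, of z2 z] z(1) by (simp add: z2_def)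
      then have "h z2 \<in> h ` H" by blast
      moreover have "\<And>i. i \<in> {..<n} \<Longrightarrow> h z2 i = w i"
        using p'i pne by (auto simp: z(2) h_def h'_def act_def z2_def)
      ultimately have "w \<in> h ` H" using depD[OF dhH, of "h z2" w] by blast
      then show "w \<in> act (Suc n) p t ` H" by (simp add: h_def)
    qed
  next
    show "act (Suc n) p t ` H \<subseteq> act n (transpose (p n) n \<circ> p) t ` H"
    proof
      fix w assume "w \<in> act (Suc n) p t ` H"
      then obtain z where z: "z \<in> H" "w = h z" unfolding h_def by blast
      define z2 where "z2 = z(q := z n)"
      have agree: "\<And>i. i \<in> {..<n} \<Longrightarrow> h z i = h z2 i"
        using pne by (auto simp: h_def act_def z2_def)
      have "h z2 \<in> h ` H" using depD[OF dhH, of "h z" "h z2"] agree z(1) by blast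
      then have "z2 \<in> H" using hinj by (simp add: inj_image_mem_iff)
      then have "h' z2 \<in> h' ` H" by blast
      moreover have "\<And>i. i \<in> {..<n} \<Longrightarrow> h' z2 i = w i"
        using p'i pne by (auto simp: z(2) h_def h'_def act_def z2_def)
      ultimately have "w \<in> h' ` H" using depD[OF dh'H, of "h' z2" w] by blast
      then show "w \<in> act n (transpose (p n) n \<circ> p) t ` H" by (simp add: h'_def p'_def q_def)
    qed
  qed
qed



lemma ext_power_supp: "c \<in> ext_power A r \<Longrightarrow> c xs \<noteq> 0 \<Longrightarrow> length xs = r \<and> set xs \<subseteq> A"
  unfolding ext_power_def by auto

lemma ext_power_dist: "c \<in> ext_power A r \<Longrightarrow> \<not> distinct xs \<Longrightarrow> c xs = 0"
  unfolding ext_power_def by auto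

lemma ext_power_swap: "c \<in> ext_power A r \<Longrightarrow> i < length xs \<Longrightarrow> j < length xs \<Longrightarrow> i \<noteq> j \<Longrightarrow>
              c (xs[i := xs ! j, j := xs ! i]) = - c xs"
  unfolding ext_power_def by auto

lemma cohom_ext: "c \<in> cohom d n r \<Longrightarrow> c \<in> ext_power (arrangement d n) r"
  unfolding cohom_def by auto

lemma cohom_inv: "c \<in> cohom d n r \<Longrightarrow> M \<in> monomial_group d n \<Longrightarrow> c (map (\<lambda>H. mat_act n M ` H) xs) = c xs"
  unfolding cohom_def by auto

lemma wd0:
  assumes d: "d \<ge> 1" and c: "c \<in> cohom d n r"
    and ys: "set ys \<subseteq> arrangement d n" and h: "h \<in> Fg d (Suc n)"
    and hys: "\<forall>H\<in>set ys. h ` H \<in> arrangement d n"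
  shows "c (map ((`) h) ys) = c ys"
proof -
  obtain p t where f: "h = act (Suc n) p t" "p permutes {..<Suc n}" "\<forall>i<Suc n. t i ^ d = 1"
    using h unfolding Fg_def by blast
  define h' where "h' = act n (transpose (p n) n \<circ> p) t"
  have eq: "map ((`) h) ys = map ((`) h') ys"
    using hl[OF d f(2) f(3)] ys hys unfolding f(1) h'_def by (auto intro!: map_cong)
  have p'perm1: "transpose (p n) n \<circ> p permutes {..<Suc n}"
    by (rule permutes_compose[OF f(2) permutes_swap_id]) (use permutes_in_image[OF f(2), of n] in auto)
  have p'perm: "transpose (p n) n \<circ> p permutes {..<n}"
    by (rule permutes_superset[OF p'perm1]) auto
  have h'F: "h' \<in> Fg d n" unfolding h'_def Fg_def using p'perm f(3)
    by (intro CollectI exI[of _ "transpose (p n) n \<circ> p"] exI[of _ t]) auto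
  obtain M where M: "M \<in> monomial_group d n" "mat_act n M = h'" using Fg_to_mono[OF d h'F] by blast
  have "c (map (\<lambda>H. mat_act n M ` H) ys) = c ys" using cohom_inv[OF c M(1)] .
  then have "c (map ((`) h') ys) = c ys" using M(2) by simp
  then show ?thesis unfolding eq .
qed

lemma WD:
  assumes d: "d \<ge> 1" and c: "c \<in> cohom d n r"
    and g1: "g1 \<in> Fg d (Suc n)" "\<forall>H\<in>set xs. g1 ` H \<in> arrangement d n"
    and g2: "g2 \<in> Fg d (Suc n)" "\<forall>H\<in>set xs. g2 ` H \<in> arrangement d n"
  shows "c (map ((`) g1) xs) = c (map ((`) g2) xs)"
proof -
  obtain g1i where gi: "g1i \<in> Fg d (Suc n)" "g1i \<circ> g1 = id" using Fg_inv[OF d g1(1)] by blast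
  define h where "h = g2 \<circ> g1i"
  have hF: "h \<in> Fg d (Suc n)" unfolding h_def using Fg_comp[OF g2(1) gi(1)] .
  have img: "h ` (g1 ` H) = g2 ` H" for H
  proof -
    have "h ` (g1 ` H) = g2 ` ((g1i \<circ> g1) ` H)" unfolding h_def by (simp add: image_comp)
    then show ?thesis using gi(2) by simp
  qed
  have e1: "c (map ((`) h) (map ((`) g1) xs)) = c (map ((`) g1) xs)"
    by (rule wd0[OF d c _ hF]) (use g1 g2 img in auto)
  have e2: "map ((`) h) (map ((`) g1) xs) = map ((`) g2) xs" using img by simp
  show ?thesis using e1 unfolding e2 by simp
qed

definition extc :: "nat \<Rightarrow> nat \<Rightarrow> (((nat \<Rightarrow> complex) set) list \<Rightarrow> rat) \<Rightarrow> (((nat \<Rightarrow> complex) set) list \<Rightarrow> rat)" where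
  "extc d n c = (\<lambda>xs. if \<exists>g. g \<in> Fg d (Suc n) \<and> (\<forall>H\<in>set xs. g ` H \<in> arrangement d n)
      then c (map ((`) (SOME g. g \<in> Fg d (Suc n) \<and> (\<forall>H\<in>set xs. g ` H \<in> arrangement d n))) xs) else 0)"

lemma extc_val:
  assumes d: "d \<ge> 1" and c: "c \<in> cohom d n r"
    and g: "g \<in> Fg d (Suc n)" "\<forall>H\<in>set xs. g ` H \<in> arrangement d n"
  shows "extc d n c xs = c (map ((`) g) xs)"
proof -
  let ?P = "\<lambda>g. g \<in> Fg d (Suc n) \<and> (\<forall>H\<in>set xs. g ` H \<in> arrangement d n)"
  have ex: "\<exists>g. ?P g" using g by blast
  have "?P (SOME g. ?P g)" using someI_ex[OF ex] .
  then have "c (map ((`) (SOME g. ?P g)) xs) = c (map ((`) g) xs)"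
    using WD[OF d c _ _ g] by blast
  then show ?thesis using ex unfolding extc_def by simp
qed

lemma extc_zero:
  assumes "\<not> (\<exists>g. g \<in> Fg d (Suc n) \<and> (\<forall>H\<in>set xs. g ` H \<in> arrangement d n))"
  shows "extc d n c xs = 0"
  unfolding extc_def by (simp only: if_not_P[OF assms])

lemma set_swap2:
  assumes "i < length xs" "j < length xs"
  shows "set (xs[i := xs ! j, j := xs ! i]) = set xs"
proof (cases "i = j")
  case True
  then show ?thesis by simp
next
  case False
  have "xs[i := xs ! j, j := xs ! i] = xs[j := xs ! i, i := xs ! j]"
    using False by (simp add: list_update_swap)
  then have "mset (xs[i := xs ! j, j := xs ! i]) = mset xs" using mset_swap[OF assms] by simp
  then show ?thesis by (metis set_mset_mset)
qed

lemma extc_in: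
  assumes d: "d \<ge> 1" and c: "c \<in> cohom d n r"
  shows "extc d n c \<in> cohom d (Suc n) r"
proof -
  have cE: "c \<in> ext_power (arrangement d n) r" using cohom_ext[OF c] .
  note csupp = ext_power_supp[OF cE] and cdist = ext_power_dist[OF cE] and cswap = ext_power_swap[OF cE]
  let ?P = "\<lambda>xs g. g \<in> Fg d (Suc n) \<and> (\<forall>H\<in>set xs. g ` H \<in> arrangement d n)"
  have s1: "length xs = r \<and> set xs \<subseteq> arrangement d (Suc n)" if nz: "extc d n c xs \<noteq> 0" for xs
  proof -
    have "\<exists>g. ?P xs g"
    proof (rule ccontr)
      assume "\<not> (\<exists>g. ?P xs g)"
      then have "extc d n c xs = 0" by (rule extc_zero)
      then show False using nz by simp
    qed
    then obtain g where g: "?P xs g" by blast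
    have "extc d n c xs = c (map ((`) g) xs)" using g by (intro extc_val[OF d c]) auto
    then have cnz: "c (map ((`) g) xs) \<noteq> 0" using nz by simp
    have "length xs = r" using csupp[OF cnz] by simp
    moreover have "set xs \<subseteq> arrangement d (Suc n)"
    proof
      fix H assume "H \<in> set xs"
      then have "g ` H \<in> arrangement d (Suc n)" using g arr_mono by blast
      then show "H \<in> arrangement d (Suc n)" using Fg_inv_img[OF d] g by blast
    qed
    ultimately show ?thesis by blast
  qed
  have s2: "extc d n c xs = 0" if nd: "\<not> distinct xs" for xs
  proof (cases "\<exists>g. ?P xs g")
    case True
    then obtain g where g: "?P xs g" by blast
    have "\<not> distinct (map ((`) g) xs)" using nd distinct_map by blast
    then have "c (map ((`) g) xs) = 0" by (rule cdist)
    moreover have "extc d n c xs = c (map ((`) g) xs)" using g by (intro extc_val[OF d c]) auto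
    ultimately show ?thesis by simp
  next
    case False
    then show ?thesis by (rule extc_zero)
  qed
  have s3: "extc d n c (xs[i := xs ! j, j := xs ! i]) = - extc d n c xs"
    if ij: "i < length xs" "j < length xs" "i \<noteq> j" for xs i j
  proof -
    have st: "set (xs[i := xs ! j, j := xs ! i]) = set xs" using set_swap2 ij by blast
    show ?thesis
    proof (cases "\<exists>g. ?P xs g")
      case True
      then obtain g where g: "?P xs g" by blast
      then have g': "?P (xs[i := xs ! j, j := xs ! i]) g" using st by simp
      have "map ((`) g) (xs[i := xs ! j, j := xs ! i])
          = (map ((`) g) xs)[i := map ((`) g) xs ! j, j := map ((`) g) xs ! i]"
        using ij by (simp add: map_update)
      then have "c (map ((`) g) (xs[i := xs ! j, j := xs ! i])) = - c (map ((`) g) xs)"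
        using cswap[of i "map ((`) g) xs" j] ij by simp
      moreover have "extc d n c xs = c (map ((`) g) xs)" using g by (intro extc_val[OF d c]) auto
      moreover have "extc d n c (xs[i := xs ! j, j := xs ! i]) = c (map ((`) g) (xs[i := xs ! j, j := xs ! i]))"
        using g' by (intro extc_val[OF d c]) auto
      ultimately show ?thesis by simp
    next
      case False
      then have "\<not> (\<exists>g. ?P (xs[i := xs ! j, j := xs ! i]) g)" using st by simp
      then have "extc d n c (xs[i := xs ! j, j := xs ! i]) = 0" by (rule extc_zero)
      moreover have "extc d n c xs = 0" using False by (rule extc_zero)
      ultimately show ?thesis by simp
    qed
  qed
  have s4: "extc d n c (map (\<lambda>H. mat_act (Suc n) M ` H) xs) = extc d n c xs"
    if M: "M \<in> monomial_group d (Suc n)" for M xs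
  proof -
    define f where "f = mat_act (Suc n) M"
    have fF: "f \<in> Fg d (Suc n)" unfolding f_def using mono_to_Fg[OF M] .
    obtain fi where fi: "fi \<in> Fg d (Suc n)" "fi \<circ> f = id" using Fg_inv[OF d fF] by blast
    let ?ys = "map ((`) f) xs"
    have ys: "map (\<lambda>H. mat_act (Suc n) M ` H) xs = ?ys" by (simp add: f_def)
    show ?thesis
    proof (cases "\<exists>g. ?P xs g")
      case True
      then obtain g where g: "?P xs g" by blast
      have gfi: "(g \<circ> fi) ` (f ` H) = g ` H" for H
      proof -
        have fif: "\<And>x. fi (f x) = x" using fi(2) by (metis comp_apply id_apply)
        show ?thesis by (simp add: image_comp fif)
      qed
      have gfiF: "g \<circ> fi \<in> Fg d (Suc n)" using g by (intro Fg_comp[OF _ fi(1)]) blast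
      have gfiA: "\<forall>H\<in>set ?ys. (g \<circ> fi) ` H \<in> arrangement d n" using g gfi by simp
      have "extc d n c ?ys = c (map ((`) (g \<circ> fi)) ?ys)" by (rule extc_val[OF d c gfiF gfiA])
      also have "\<dots> = c (map ((`) g) xs)"
      proof -
        have mm: "map ((`) (g \<circ> fi)) ?ys = map ((`) g) xs"
          by (induction xs) (simp_all only: list.map gfi)
        show ?thesis by (simp only: mm)
      qed
      also have "\<dots> = extc d n c xs" using g by (intro extc_val[OF d c, symmetric]) auto
      finally show ?thesis unfolding ys .
    next
      case False
      have "\<not> (\<exists>g. ?P ?ys g)"
      proof
        assume "\<exists>g. ?P ?ys g"
        then obtain g where g: "?P ?ys g" by blast
        have "g \<circ> f \<in> Fg d (Suc n)" using g by (intro Fg_comp[OF _ fF]) blast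
        moreover have "\<forall>H\<in>set xs. (g \<circ> f) ` H \<in> arrangement d n" using g by (simp add: image_comp)
        ultimately show False using False by blast
      qed
      then have "extc d n c ?ys = 0" by (rule extc_zero)
      moreover have "extc d n c xs = 0" using False by (rule extc_zero)
      ultimately show ?thesis unfolding ys by simp
    qed
  qed
  have e1: "\<forall>xs. extc d n c xs \<noteq> 0 \<longrightarrow> length xs = r \<and> set xs \<subseteq> arrangement d (Suc n)"
    by (intro allI impI) (rule s1)
  have e2: "\<forall>xs. \<not> distinct xs \<longrightarrow> extc d n c xs = 0" by (intro allI impI) (rule s2)
  have e3: "\<forall>xs i j. i < length xs \<longrightarrow> j < length xs \<longrightarrow> i \<noteq> j \<longrightarrow>
              extc d n c (xs[i := xs ! j, j := xs ! i]) = - extc d n c xs"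
    by (intro allI impI, rule s3) assumption+
  have eP: "extc d n c \<in> ext_power (arrangement d (Suc n)) r"
    unfolding ext_power_def by (intro CollectI conjI e1 e2 e3)
  show ?thesis unfolding cohom_def
  proof (intro CollectI conjI ballI allI)
    show "extc d n c \<in> ext_power (arrangement d (Suc n)) r" by (rule eP)
  next
    fix M xs assume "M \<in> monomial_group d (Suc n)"
    then show "extc d n c (map (\<lambda>H. mat_act (Suc n) M ` H) xs) = extc d n c xs" by (rule s4)
  qed
qed

lemma nat_extc:
  assumes d: "d \<ge> 1" and c: "c \<in> cohom d n r"
  shows "natural_map d n (extc d n c) = c"
proof
  fix xs
  note csupp = ext_power_supp[OF cohom_ext[OF c]]
  show "natural_map d n (extc d n c) xs = c xs"
  proof (cases "set xs \<subseteq> arrangement d n")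
    case True
    have "extc d n c xs = c (map ((`) id) xs)"
      by (rule extc_val[OF d c Fg_id]) (use True in auto)
    then show ?thesis using True by (simp add: natural_map_def)
  next
    case False
    then show ?thesis using csupp by (auto simp: natural_map_def)
  qed
qed

lemma nat_in:
  assumes d: "d \<ge> 1" and c: "c \<in> cohom d (Suc n) r"
  shows "natural_map d n c \<in> cohom d n r"
proof -
  have cE: "c \<in> ext_power (arrangement d (Suc n)) r" using cohom_ext[OF c] .
  note csupp = ext_power_supp[OF cE] and cdist = ext_power_dist[OF cE] and cswap = ext_power_swap[OF cE]
    and cinv = cohom_inv[OF c]
  have s3: "natural_map d n c (xs[i := xs ! j, j := xs ! i]) = - natural_map d n c xs"
    if ij: "i < length xs" "j < length xs" "i \<noteq> j" for xs i j
    using set_swap2[OF ij(1,2)] cswap[OF ij] by (simp add: natural_map_def)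
  have s4: "natural_map d n c (map (\<lambda>H. mat_act n M ` H) xs) = natural_map d n c xs"
    if M: "M \<in> monomial_group d n" for M xs
  proof -
    define f where "f = mat_act n M"
    have fF: "f \<in> Fg d n" unfolding f_def using mono_to_Fg[OF M] .
    obtain p t where f: "f = act n p t" "p permutes {..<n}" "\<forall>i<n. t i ^ d = 1"
      using fF unfolding Fg_def by blast
    have pn: "p n = n" using permutes_not_in[OF f(2)] by simp
    have "f = act (Suc n) p (t(n := 1))"
      using pn by (auto simp: f(1) act_def fun_eq_iff less_Suc_eq)
    moreover have "act (Suc n) p (t(n := 1)) \<in> Fg d (Suc n)"
      unfolding Fg_def using f(3) permutes_subset[OF f(2), of "{..<Suc n}"]
      by (intro CollectI exI[of _ p] exI[of _ "t(n := 1)"]) (auto simp: less_Suc_eq)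
    ultimately have f1: "f \<in> Fg d (Suc n)" by simp
    obtain M1 where M1: "M1 \<in> monomial_group d (Suc n)" "mat_act (Suc n) M1 = f"
      using Fg_to_mono[OF d f1] by blast
    have ceq: "c (map ((`) f) xs) = c xs" using cinv[OF M1(1), of xs] M1(2) by simp
    have "set (map ((`) f) xs) \<subseteq> arrangement d n \<longleftrightarrow> set xs \<subseteq> arrangement d n"
    proof
      assume a1: "set (map ((`) f) xs) \<subseteq> arrangement d n"
      show "set xs \<subseteq> arrangement d n"
      proof
        fix H assume "H \<in> set xs"
        then have "f ` H \<in> set (map ((`) f) xs)" by simp
        then have "f ` H \<in> arrangement d n" using a1 by (rule subsetD[rotated])
        then show "H \<in> arrangement d n" by (rule Fg_inv_img[OF d fF])
      qed
    next
      assume a2: "set xs \<subseteq> arrangement d n"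
      show "set (map ((`) f) xs) \<subseteq> arrangement d n"
      proof
        fix H' assume "H' \<in> set (map ((`) f) xs)"
        then obtain H where "H \<in> set xs" "H' = f ` H" by auto
        then show "H' \<in> arrangement d n" using Fg_image[OF d fF] a2 by blast
      qed
    qed
    then show ?thesis using ceq by (simp add: natural_map_def f_def)
  qed
  have e1: "\<forall>xs. natural_map d n c xs \<noteq> 0 \<longrightarrow> length xs = r \<and> set xs \<subseteq> arrangement d n"
  proof (intro allI impI)
    fix xs assume nz: "natural_map d n c xs \<noteq> 0"
    then have "set xs \<subseteq> arrangement d n" "c xs \<noteq> 0"
      by (simp_all add: natural_map_def split: if_splits)
    then show "length xs = r \<and> set xs \<subseteq> arrangement d n" using csupp[of xs] by simp
  qed
  have e2: "\<forall>xs. \<not> distinct xs \<longrightarrow> natural_map d n c xs = 0" using cdist by (simp add: natural_map_def)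
  have e3: "\<forall>xs i j. i < length xs \<longrightarrow> j < length xs \<longrightarrow> i \<noteq> j \<longrightarrow>
              natural_map d n c (xs[i := xs ! j, j := xs ! i]) = - natural_map d n c xs"
    by (intro allI impI, rule s3) assumption+
  have eP: "natural_map d n c \<in> ext_power (arrangement d n) r"
    unfolding ext_power_def by (intro CollectI conjI e1 e2 e3)
  show ?thesis unfolding cohom_def
  proof (intro CollectI conjI ballI allI)
    show "natural_map d n c \<in> ext_power (arrangement d n) r" by (rule eP)
  next
    fix M xs assume "M \<in> monomial_group d n"
    then show "natural_map d n c (map (\<lambda>H. mat_act n M ` H) xs) = natural_map d n c xs" by (rule s4)
  qed
qed


lemma inj_part:
  assumes d: "d \<ge> 1" and nr: "n \<ge> 2 * r"
    and c1: "c1 \<in> cohom d (Suc n) r" and c2: "c2 \<in> cohom d (Suc n) r"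
    and eq: "natural_map d n c1 = natural_map d n c2"
  shows "c1 = c2"
proof
  fix xs
  have cE1: "c1 \<in> ext_power (arrangement d (Suc n)) r" using cohom_ext[OF c1] .
  have cE2: "c2 \<in> ext_power (arrangement d (Suc n)) r" using cohom_ext[OF c2] .
  show "c1 xs = c2 xs"
  proof (cases "length xs = r \<and> set xs \<subseteq> arrangement d (Suc n)")
    case False
    then have "c1 xs = 0" "c2 xs = 0" using ext_power_supp[OF cE1, of xs] ext_power_supp[OF cE2, of xs] by auto
    then show ?thesis by simp
  next
    case True
    have "\<forall>H\<in>set xs. \<exists>a b. a < Suc n \<and> b < Suc n \<and> dep {a, b} H"
      using True arr_dep by blast
    then obtain fa where "\<forall>H\<in>set xs. \<exists>b. fa H < Suc n \<and> b < Suc n \<and> dep {fa H, b} H"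
      by metis
    then obtain fb where fab: "\<forall>H\<in>set xs. fa H < Suc n \<and> fb H < Suc n \<and> dep {fa H, fb H} H"
      by metis
    define U where "U = fa ` set xs \<union> fb ` set xs"
    have "card U \<le> card (fa ` set xs) + card (fb ` set xs)" unfolding U_def by (rule card_Un_le)
    also have "\<dots> \<le> card (set xs) + card (set xs)" by (intro add_mono card_image_le) auto
    also have "\<dots> \<le> length xs + length xs" by (intro add_mono card_length)
    finally have "card U \<le> n" using True nr by simp
    then have "\<not> {..n} \<subseteq> U"
      using card_mono[of U "{..n}"] unfolding U_def by auto
    then obtain k where k: "k \<le> n" "k \<notin> U" by auto
    define f where "f = act (Suc n) (transpose k n) (\<lambda>_. 1)"
    have tp: "transpose k n permutes {..<Suc n}" using k(1) by (intro permutes_swap_id) auto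
    have fF: "f \<in> Fg d (Suc n)" unfolding f_def Fg_def using tp
      by (intro CollectI exI[of _ "transpose k n"] exI[of _ "\<lambda>_. 1"]) auto
    have ff: "f \<circ> f = id"
    proof (rule ext)
      fix z show "(f \<circ> f) z = id z"
        using k(1) by (auto simp: f_def act_def fun_eq_iff transpose_def)
    qed
    have fA: "f ` H \<in> arrangement d n" if H: "H \<in> set xs" for H
    proof -
      have HA: "H \<in> arrangement d (Suc n)" using True H by blast
      have fa: "fa H < Suc n" "fb H < Suc n" "dep {fa H, fb H} H" using fab H by auto
      have nk: "fa H \<noteq> k" "fb H \<noteq> k" using k(2) H unfolding U_def by auto
      have img: "f ` H = f -` H" using image_inv_eq[OF ff ff] .
      have "dep {..<n} (f -` H)"
      proof (rule depI)
        fix z z' assume ag: "\<And>i. i \<in> {..<n} \<Longrightarrow> z i = z' i" and zH: "z \<in> f -` H"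
        have "\<And>i. i \<in> {fa H, fb H} \<Longrightarrow> f z i = f z' i"
        proof -
          fix i assume "i \<in> {fa H, fb H}"
          then have i: "i < Suc n" "i \<noteq> k" using fa nk by auto
          have "transpose k n i < n"
            using i k(1) by (auto simp: transpose_def)
          then show "f z i = f z' i" using i ag by (simp add: f_def act_def)
        qed
        then have "f z \<in> H \<longleftrightarrow> f z' \<in> H" by (rule depD[OF fa(3)])
        then show "z' \<in> f -` H" using zH by simp
      qed
      then have "dep {..<n} (f ` H)" using img by simp
      moreover have "f ` H \<in> arrangement d (Suc n)" using Fg_image[OF d fF HA] .
      ultimately show ?thesis using arr_down[OF d] by blast
    qed
    obtain M where M: "M \<in> monomial_group d (Suc n)" "mat_act (Suc n) M = f"
      using Fg_to_mono[OF d fF] by blast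
    have i1: "c1 (map ((`) f) xs) = c1 xs" using cohom_inv[OF c1 M(1), of xs] M(2) by simp
    have i2: "c2 (map ((`) f) xs) = c2 xs" using cohom_inv[OF c2 M(1), of xs] M(2) by simp
    have sub: "set (map ((`) f) xs) \<subseteq> arrangement d n" using fA by auto
    have "natural_map d n c1 (map ((`) f) xs) = natural_map d n c2 (map ((`) f) xs)" using eq by simp
    then have "c1 (map ((`) f) xs) = c2 (map ((`) f) xs)" using sub by (simp add: natural_map_def)
    then show ?thesis using i1 i2 by simp
  qed
qed

theorem proposition3p21:
  fixes d r :: nat
  assumes "d \<ge> 1"
  shows "(\<forall>n \<ge> 1. natural_map d n ` cohom d (Suc n) r = cohom d n r)
       \<and> (\<forall>n. n \<ge> 1 \<longrightarrow> n \<ge> 2 * r \<longrightarrow> bij_betw (natural_map d n) (cohom d (Suc n) r) (cohom d n r))"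
proof -
  have surj: "natural_map d n ` cohom d (Suc n) r = cohom d n r" for n
  proof
    show "natural_map d n ` cohom d (Suc n) r \<subseteq> cohom d n r"
      using nat_in[OF assms] by blast
  next
    show "cohom d n r \<subseteq> natural_map d n ` cohom d (Suc n) r"
    proof
      fix c assume c: "c \<in> cohom d n r"
      have "c = natural_map d n (extc d n c)" using nat_extc[OF assms c] by simp
      then show "c \<in> natural_map d n ` cohom d (Suc n) r" using extc_in[OF assms c] by blast
    qed
  qed
  have bij: "bij_betw (natural_map d n) (cohom d (Suc n) r) (cohom d n r)" if "n \<ge> 2 * r" for n
    unfolding bij_betw_def
  proof
    show "inj_on (natural_map d n) (cohom d (Suc n) r)"
      by (rule inj_onI) (rule inj_part[OF assms that])
    show "natural_map d n ` cohom d (Suc n) r = cohom d n r" by (rule surj)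
  qed
  show ?thesis using surj bij by blast
qed

end
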